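(* Let $L_{\mathrm{Rect}}$ be the set of words of positive length over the alphabet $\{1,2,u,d\}$ defined in the context. Then: (1) $L_{\mathrm{Rect}}$ consists precisely of those nonempty words over $\{1,2,u,d\}$ whose last (rightmost) letter is $1$ and which contain neither $21$ nor $u1$ as a (contiguous) substring; (2) $L_{\mathrm{Rect}}$ is the language of the regular expression $(1^*(2|u)^*d)^*1^+$.
   Context: Permutations $\pi\in S_n$ are written in one-line form $[\pi_1\cdots\pi_n]$; $e_n$ denotes the identity of $S_n$ and $e_0$ the unique (empty) permutation of size $0$. A permutation is rectangular if it avoids the patterns $2413,2431,4213,4231$. For $\pi\in S_n$ and $1\le i,j\le n+1$, the insertion operator $\rho_{i,j}(\pi)\in S_{n+1}$ is obtained by increasing by $1$ every entry of $\pi$ that is $\ge i$ and then inserting the value $i$ so that it occupies position $j$. Define operators on rectangular permutations: $\psi_1=\rho_{1,1}$, with domain all rectangular permutations (including $e_0$); $\psi_2=\rho_{1,2}$, with domain the rectangular permutations $\pi$ of size $\ge 1$ with $\pi_1\ne 1$; $\psi_u(\pi)=\rho_{\pi_1,1}(\pi)$, with the same domain as $\psi_2$; $\psi_d(\pi)=\rho_{\pi_1+1,1}(\pi)$, with domain all rectangular permutations of size $\ge1$. A word $x_m x_{m-1}\cdots x_1$ over $\{1,2,u,d\}$ stands for the composition $\psi_{x_m}\circ\cdots\circ\psi_{x_1}$ (the rightmost letter is applied first). $L_{\mathrm{Rect}}$ is the set of words of length $m\ge1$ such that $\psi_{x_m}\circ\cdots\circ\psi_{x_1}(e_0)$ is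 defined, i.e. for each $j$, the permutation $\psi_{x_{j-1}}\circ\cdots\circ\psi_{x_1}(e_0)$ lies in the domain of $\psi_{x_j}$. *)

theory Defs
  imports Main "HOL-Library.Sublist"
begin

text \<open>Permutations are represented in one-line form as lists of naturals;
  a permutation of size n is a list that is a rearrangement of [1..n].\<close>

definition is_perm :: "nat list \<Rightarrow> bool" where
  "is_perm xs \<longleftrightarrow> distinct xs \<and> set xs = {1..length xs}"

definition contains_pattern :: "nat list \<Rightarrow> nat list \<Rightarrow> bool" where
  "contains_pattern p xs \<longleftrightarrow>
     (\<exists>is. length is = length p \<and> sorted_wrt (<) is \<and> (\<forall>k\<in>set is. k < length xs) \<and>
        (\<forall>a<length p. \<forall>b<length p. (xs ! (is ! a) < xs ! (is ! b)) \<longleftrightarrow> (p ! a < p ! b)))"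

definition avoids :: "nat list \<Rightarrow> nat list \<Rightarrow> bool" where
  "avoids xs p \<longleftrightarrow> \<not> contains_pattern p xs"

definition rectangular :: "nat list \<Rightarrow> bool" where
  "rectangular xs \<longleftrightarrow> is_perm xs \<and>
     avoids xs [2,4,1,3] \<and> avoids xs [2,4,3,1] \<and> avoids xs [4,2,1,3] \<and> avoids xs [4,2,3,1]"

text \<open>Insertion operator rho_{i,j}: increase entries \<ge> i by one, then insert
  value i so that it occupies (1-based) position j.\<close>
definition rho :: "nat \<Rightarrow> nat \<Rightarrow> nat list \<Rightarrow> nat list" where
  "rho i j xs = (let ys = map (\<lambda>v. if v \<ge> i then v + 1 else v) xs
                 in take (j - 1) ys @ [i] @ drop (j - 1) ys)"

datatype letter = One | Two | U | D

fun psi :: "letter \<Rightarrow> nat list \<Rightarrow> nat list option" where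
  "psi One xs = (if rectangular xs then Some (rho 1 1 xs) else None)"
| "psi Two xs = (if rectangular xs \<and> length xs \<ge> 1 \<and> hd xs \<noteq> 1 then Some (rho 1 2 xs) else None)"
| "psi U xs = (if rectangular xs \<and> length xs \<ge> 1 \<and> hd xs \<noteq> 1 then Some (rho (hd xs) 1 xs) else None)"
| "psi D xs = (if rectangular xs \<and> length xs \<ge> 1 then Some (rho (hd xs + 1) 1 xs) else None)"

text \<open>A word x_m x_{m-1} ... x_1 is the list [x_m, ..., x_1]; the rightmost
  letter (last of the list) is applied first, starting from e_0 = [].\<close>
fun eval_word :: "letter list \<Rightarrow> nat list option" where
  "eval_word [] = Some []"
| "eval_word (x # w) = (case eval_word w of None \<Rightarrow> None | Some p \<Rightarrow> psi x p)"

definition L_Rect :: "letter list set" where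
  "L_Rect = {w. w \<noteq> [] \<and> eval_word w \<noteq> None}"

datatype rexp = Zero | Eps | Atom letter | Alt rexp rexp | Times rexp rexp | Star rexp

definition conc :: "'a list set \<Rightarrow> 'a list set \<Rightarrow> 'a list set" where
  "conc A B = {u @ v | u v. u \<in> A \<and> v \<in> B}"

inductive_set star :: "'a list set \<Rightarrow> 'a list set" for A where
  star_nil: "[] \<in> star A"
| star_app: "u \<in> A \<Longrightarrow> v \<in> star A \<Longrightarrow> u @ v \<in> star A"

fun lang :: "rexp \<Rightarrow> letter list set" where
  "lang Zero = {}"
| "lang Eps = {[]}"
| "lang (Atom a) = {[a]}"
| "lang (Alt r s) = lang r \<union> lang s"
| "lang (Times r s) = conc (lang r) (lang s)"
| "lang (Star r) = star (lang r)"

definition Plus1 :: "rexp \<Rightarrow> rexp" where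
  "Plus1 r = Times r (Star r)"

definition rect_rexp :: rexp where
  "rect_rexp = Times (Star (Times (Star (Atom One)) (Times (Star (Alt (Atom Two) (Atom U))) (Atom D))))
                     (Plus1 (Atom One))"

end

theory Submission
  imports Defs
begin

definition sh :: "nat \<Rightarrow> nat \<Rightarrow> nat" where "sh i v = (if v \<ge> i then v + 1 else v)"

lemma sh_mono: "strict_mono (sh i)"
  by (rule strict_monoI) (auto simp: sh_def)

lemma rho_sh: "rho i j xs = take (j - 1) (map (sh i) xs) @ [i] @ drop (j - 1) (map (sh i) xs)"
proof -
  have "(\<lambda>v. if v \<ge> i then v + 1 else v) = sh i" by (rule ext) (simp add: sh_def)
  then show ?thesis by (simp add: rho_def Let_def)
qed

lemma rho1: "rho i 1 xs = i # map (sh i) xs" by (simp add: rho_sh)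
lemma rho2: "rho i 2 (x # xs) = sh i x # i # map (sh i) xs" by (simp add: rho_sh)

lemma set_ins:
  assumes "1 \<le> i" "i \<le> Suc n"
  shows "insert i (sh i ` {1..n}) = {1..Suc n}"
proof (intro equalityI subsetI)
  fix x assume "x \<in> insert i (sh i ` {1..n})"
  then show "x \<in> {1..Suc n}" using assms by (auto simp: sh_def)
next
  fix x assume x: "x \<in> {1..Suc n}"
  show "x \<in> insert i (sh i ` {1..n})"
  proof (cases "x = i")
    case False
    show ?thesis
    proof (cases "x < i")
      case True
      then have "sh i x = x" "x \<in> {1..n}" using x assms by (auto simp: sh_def)
      then show ?thesis by (metis image_eqI insertI2)
    next
      case False
      then have "sh i (x - 1) = x" "x - 1 \<in> {1..n}" using x assms \<open>x \<noteq> i\<close> by (auto simp: sh_def)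
      then show ?thesis by (metis image_eqI insertI2)
    qed
  qed simp
qed

lemma perm_ins:
  assumes "is_perm xs" "1 \<le> i" "i \<le> Suc (length xs)"
  shows "is_perm (i # map (sh i) xs)"
proof -
  have inj: "inj (sh i)" using sh_mono strict_mono_imp_inj_on by blast
  have "i \<notin> sh i ` set xs" by (auto simp: sh_def)
  moreover have "inj_on (sh i) (set xs)" by (meson inj inj_on_subset subset_UNIV)
  then have "distinct (map (sh i) xs)" using assms(1)
    by (simp add: is_perm_def distinct_map)
  moreover have "set (i # map (sh i) xs) = {1..length (i # map (sh i) xs)}"
    using assms set_ins[of i "length xs"] by (simp add: is_perm_def)
  ultimately show ?thesis by (simp add: is_perm_def)
qed

lemma perm_swap: "is_perm (a # b # l) \<Longrightarrow> is_perm (b # a # l)"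
  by (auto simp: is_perm_def insert_commute)

definition occ :: "nat list \<Rightarrow> nat list \<Rightarrow> nat list \<Rightarrow> bool" where
  "occ p xs is \<longleftrightarrow> length is = length p \<and> sorted_wrt (<) is \<and> (\<forall>k\<in>set is. k < length xs) \<and>
        (\<forall>a<length p. \<forall>b<length p. (xs ! (is ! a) < xs ! (is ! b)) \<longleftrightarrow> (p ! a < p ! b))"

lemma contains_occ: "contains_pattern p xs \<longleftrightarrow> (\<exists>is. occ p xs is)"
  by (simp add: contains_pattern_def occ_def)

lemma occ_transfer:
  assumes "occ p ys is" "\<forall>k\<in>set is. g k < length xs"
    "\<forall>k\<in>set is. \<forall>l\<in>set is. k < l \<longrightarrow> g k < g l"
    "\<forall>k\<in>set is. ys ! k = F (xs ! g k)" "strict_mono F"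
  shows "contains_pattern p xs"
  unfolding contains_occ
proof (intro exI[of _ "map g is"])
  have s: "sorted_wrt (<) is" and l: "length is = length p"
    and c: "\<forall>a<length p. \<forall>b<length p. (ys ! (is ! a) < ys ! (is ! b)) \<longleftrightarrow> (p ! a < p ! b)"
    using assms(1) by (auto simp: occ_def)
  have "sorted_wrt (<) (map g is)" unfolding sorted_wrt_map
    using s assms(3) by (auto simp: sorted_wrt_iff_nth_less)
  moreover have "\<forall>a<length p. \<forall>b<length p. (xs ! (map g is ! a) < xs ! (map g is ! b)) \<longleftrightarrow> (p ! a < p ! b)"
  proof (intro allI impI)
    fix a b assume ab: "a < length p" "b < length p"
    then have "is ! a \<in> set is" "is ! b \<in> set is" using l by auto
    then have "ys ! (is ! a) < ys ! (is ! b) \<longleftrightarrow> xs ! g (is ! a) < xs ! g (is ! b)"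
      using assms(4,5) by (simp add: strict_mono_less)
    then show "(xs ! (map g is ! a) < xs ! (map g is ! b)) \<longleftrightarrow> (p ! a < p ! b)"
      using c ab l by simp
  qed
  ultimately show "occ p xs (map g is)" using l assms(2) by (auto simp: occ_def)
qed

lemma idx_ge: "sorted_wrt (<) ix \<Longrightarrow> a < length ix \<Longrightarrow> a \<le> ix ! a"
proof (induction a)
  case (Suc a)
  then have "ix ! a < ix ! Suc a" by (simp add: sorted_wrt_nth_less)
  with Suc show ?case by simp
qed simp

lemma zero_in: fixes ix :: "nat list" assumes "sorted_wrt (<) ix" "0 \<in> set ix" shows "ix ! 0 = 0"
proof -
  obtain a where a: "a < length ix" "ix ! a = 0" using assms(2) by (metis in_set_conv_nth)
  show ?thesis
  proof (cases a)
    case (Suc b) then have "ix ! 0 < ix ! a" using sorted_wrt_nth_less[OF assms(1), of 0 a] a by simp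
    then show ?thesis using a by simp
  qed (use a in simp)
qed

lemma one_in: fixes ix :: "nat list" assumes "sorted_wrt (<) ix" "0 \<in> set ix" "1 \<in> set ix" shows "ix ! 1 = 1"
proof -
  obtain a where a: "a < length ix" "ix ! a = 1" using assms(3) by (metis in_set_conv_nth)
  have "a \<le> 1" using idx_ge[OF assms(1) a(1)] a by simp
  moreover have "a \<noteq> 0" using zero_in[OF assms(1,2)] a by (cases a) auto
  ultimately show ?thesis using a by (metis le_neq_implies_less less_one)
qed


lemma drop0:
  assumes "occ p (c # map F xs) ix" "0 \<notin> set ix" "strict_mono F"
  shows "contains_pattern p xs"
proof (rule occ_transfer[OF assms(1), where g = "\<lambda>k. k - 1" and F = F])
  have b: "\<forall>k\<in>set ix. k < Suc (length xs)" using assms(1) by (simp add: occ_def)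
  then show "\<forall>k\<in>set ix. k - 1 < length xs" using assms(2)
    by (metis Suc_pred' bot_nat_0.not_eq_extremum not_less_eq)
  show "\<forall>k\<in>set ix. \<forall>l\<in>set ix. k < l \<longrightarrow> k - 1 < l - 1"
  proof (intro ballI impI)
    fix k l assume "k \<in> set ix" "l \<in> set ix" "k < l"
    then have "k \<noteq> 0" using assms(2) by (metis)
    then show "k - 1 < l - 1" using \<open>k < l\<close> by arith
  qed
  show "\<forall>k\<in>set ix. (c # map F xs) ! k = F (xs ! (k - 1))"
  proof
    fix k assume k: "k \<in> set ix"
    then obtain m where "k = Suc m" using assms(2) by (metis not0_implies_Suc)
    with b k show "(c # map F xs) ! k = F (xs ! (k - 1))" by auto
  qed
qed (rule assms(3))

lemma drop1:
  assumes "occ p (F a # c # map F' xs) ix" "1 \<notin> set ix" "\<forall>v\<in>set xs. F' v = F v" "strict_mono F"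
  shows "contains_pattern p (a # xs)"
proof (rule occ_transfer[OF assms(1), where g = "\<lambda>k. if k = 0 then 0 else k - 1" and F = F])
  have b: "\<forall>k\<in>set ix. k < Suc (Suc (length xs))" using assms(1) by (simp add: occ_def)
  then show "\<forall>k\<in>set ix. (if k = 0 then 0 else k - 1) < length (a # xs)" using assms(2)
    by auto
  show "\<forall>k\<in>set ix. \<forall>l\<in>set ix. k < l \<longrightarrow> (if k = 0 then 0 else k - 1) < (if l = 0 then 0 else l - 1)"
  proof (intro ballI impI)
    fix k l assume kl: "k \<in> set ix" "l \<in> set ix" "k < l"
    have "k \<noteq> 1" using kl(1) assms(2) by metis
    moreover have "l \<noteq> 1" using kl(2) assms(2) by metis
    ultimately show "(if k = 0 then 0 else k - 1) < (if l = 0 then 0 else l - 1)" using kl(3) by auto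
  qed
  show "\<forall>k\<in>set ix. (F a # c # map F' xs) ! k = F ((a # xs) ! (if k = 0 then 0 else k - 1))"
  proof
    fix k assume k: "k \<in> set ix"
    show "(F a # c # map F' xs) ! k = F ((a # xs) ! (if k = 0 then 0 else k - 1))"
    proof (cases k)
      case (Suc k')
      then obtain m where m: "k = Suc (Suc m)" using assms(2) k by (cases k') auto
      with b k have "m < length xs" by auto
      then show ?thesis using m assms(3) by auto
    qed simp
  qed
qed (rule assms(4))

lemma adjacent:
  assumes "occ p ys ix" "0 \<in> set ix" "1 \<in> set ix" "ys ! 1 = Suc (ys ! 0) \<or> ys ! 0 = Suc (ys ! 1)"
    "1 < length p" "\<exists>c<length p. (p!0 < p!c \<and> p!c < p!1) \<or> (p!1 < p!c \<and> p!c < p!0)"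
  shows False
proof -
  have s: "sorted_wrt (<) ix" and cmp: "\<forall>a<length p. \<forall>b<length p. (ys ! (ix ! a) < ys ! (ix ! b)) \<longleftrightarrow> (p ! a < p ! b)"
    using assms(1) by (auto simp: occ_def)
  have i0: "ix ! 0 = 0" and i1: "ix ! 1 = 1" using zero_in[OF s assms(2)] one_in[OF s assms(2,3)] by auto
  obtain c where c: "c < length p" "(p!0 < p!c \<and> p!c < p!1) \<or> (p!1 < p!c \<and> p!c < p!0)" using assms(6) by blast
  have h: "\<And>a b. a < length p \<Longrightarrow> b < length p \<Longrightarrow> (ys!(ix!a) < ys!(ix!b)) = (p!a<p!b)" using cmp by blast
  have l0: "0 < length p" using assms(5) by linarith
  have "(ys!0 < ys!(ix!c)) = (p!0 < p!c)" using h[OF l0 c(1)] i0 by simp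
  moreover have "(ys!1 < ys!(ix!c)) = (p!1 < p!c)" using h[OF assms(5) c(1)] i1 by simp
  moreover have "(ys!(ix!c) < ys!0) = (p!c < p!0)" using h[OF c(1) l0] i0 by simp
  moreover have "(ys!(ix!c) < ys!1) = (p!c < p!1)" using h[OF c(1) assms(5)] i1 by simp
  ultimately have "(ys!0 < ys!(ix!c) \<and> ys!(ix!c) < ys!1) \<or> (ys!1 < ys!(ix!c) \<and> ys!(ix!c) < ys!0)"
    using c(2) by blast
  then show False using assms(4) by auto
qed

lemma minpos:
  assumes "occ p ys ix" "ix ! a = m" "a < length p" "\<forall>k<length ys. ys ! m \<le> ys ! k"
    "b < length p" "p ! b < p ! a"
  shows False
proof -
  have "ys ! (ix ! b) < ys ! (ix ! a)" using assms(1,3,5,6) by (auto simp: occ_def)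
  moreover have "ix ! b < length ys" using assms(1,5) by (auto simp: occ_def)
  ultimately show False using assms(2,4) by fastforce
qed

lemma pres1:
  assumes "contains_pattern p (1 # map (sh 1) xs)" "0 \<notin> set xs" "\<exists>b<length p. p!b < p!0"
  shows "contains_pattern p xs"
proof -
  obtain ix where o: "occ p (1 # map (sh 1) xs) ix" using assms(1) contains_occ by blast
  show ?thesis
  proof (cases "0 \<in> set ix")
    case True
    have s: "sorted_wrt (<) ix" using o by (simp add: occ_def)
    have i0: "ix ! 0 = 0" using zero_in[OF s True] .
    obtain b where b: "b < length p" "p!b < p!0" using assms(3) by blast
    have mn: "\<forall>k<length (1 # map (sh 1) xs). (1 # map (sh 1) xs) ! 0 \<le> (1 # map (sh 1) xs) ! k"
    proof (intro allI impI)
      fix k assume "k < length (1 # map (sh 1) xs)"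
      moreover have "0 \<notin> set (1 # map (sh 1) xs)" using assms(2) by (auto simp: sh_def)
      ultimately have "(1 # map (sh 1) xs) ! k \<noteq> 0" by (metis nth_mem)
      then show "(1 # map (sh 1) xs) ! 0 \<le> (1 # map (sh 1) xs) ! k" by simp
    qed
    have "0 < length p" using b by auto
    then show ?thesis using minpos[OF o i0 _ mn b] by blast
  next
    case False
    show ?thesis using drop0[OF o False sh_mono] .
  qed
qed

lemma pres2:
  assumes "contains_pattern p (sh 1 x # 1 # map (sh 1) xs)" "0 \<notin> set (x # xs)"
    "\<exists>b<length p. p!b < p!0" "\<exists>b<length p. p!b < p!1" "1 < length p"
  shows "contains_pattern p (x # xs)"
proof -
  let ?ys = "sh 1 x # 1 # map (sh 1) xs"
  obtain ix where o: "occ p ?ys ix" using assms(1) contains_occ by blast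
  show ?thesis
  proof (cases "1 \<in> set ix")
    case True
    have s: "sorted_wrt (<) ix" and l: "length ix = length p" using o by (auto simp: occ_def)
    obtain a where a: "a < length ix" "ix ! a = 1" using True by (metis in_set_conv_nth)
    have "a \<le> 1" using idx_ge[OF s a(1)] a by simp
    have mn: "\<forall>k<length ?ys. ?ys ! 1 \<le> ?ys ! k"
    proof (intro allI impI)
      fix k assume "k < length ?ys"
      moreover have "0 \<notin> set ?ys" using assms(2) by (auto simp: sh_def)
      ultimately have "?ys ! k \<noteq> 0" by (metis nth_mem)
      then show "?ys ! 1 \<le> ?ys ! k" by simp
    qed
    show ?thesis
    proof (cases a)
      case 0
      obtain b where b: "b < length p" "p!b < p!0" using assms(3) by blast
      have "ix ! 0 = 1" using a 0 by simp
      moreover have "0 < length p" using b by auto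
      ultimately show ?thesis using minpos[OF o _ _ mn b] by blast
    next
      case (Suc a')
      then have "a = 1" using \<open>a \<le> 1\<close> by simp
      obtain b where b: "b < length p" "p!b < p!1" using assms(4) by blast
      have "ix ! 1 = 1" using a \<open>a = 1\<close> by simp
      then show ?thesis using minpos[OF o _ assms(5) mn b] by blast
    qed
  next
    case False
    show ?thesis using drop1[OF o False _ sh_mono] by simp
  qed
qed

lemma presU:
  assumes "contains_pattern p (a # map (sh a) (a # xs))" "a \<notin> set xs"
    "1 < length p" "\<exists>c<length p. (p!0 < p!c \<and> p!c < p!1) \<or> (p!1 < p!c \<and> p!c < p!0)"
  shows "contains_pattern p (a # xs)"
proof -
  let ?ys = "a # map (sh a) (a # xs)"
  obtain ix where o: "occ p ?ys ix" using assms(1) contains_occ by blast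
  show ?thesis
  proof (cases "0 \<in> set ix")
    case False
    show ?thesis using drop0[OF o False sh_mono] .
  next
    case T0: True
    show ?thesis
    proof (cases "1 \<in> set ix")
      case True
      have "?ys ! 1 = Suc (?ys ! 0)" by (simp add: sh_def)
      then show ?thesis using adjacent[OF o T0 True _ assms(3,4)] by blast
    next
      case False
      have ys: "?ys = sh (Suc a) a # Suc a # map (sh a) xs" by (simp add: sh_def)
      have "\<forall>v\<in>set xs. sh a v = sh (Suc a) v" using assms(2) by (auto simp: sh_def le_less)
      then show ?thesis using drop1[OF o[unfolded ys] False _ sh_mono] by blast
    qed
  qed
qed

lemma presD:
  assumes "contains_pattern p (Suc a # map (sh (Suc a)) (a # xs))" "a \<notin> set xs"
    "1 < length p" "\<exists>c<length p. (p!0 < p!c \<and> p!c < p!1) \<or> (p!1 < p!c \<and> p!c < p!0)"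
  shows "contains_pattern p (a # xs)"
proof -
  let ?ys = "Suc a # map (sh (Suc a)) (a # xs)"
  obtain ix where o: "occ p ?ys ix" using assms(1) contains_occ by blast
  show ?thesis
  proof (cases "0 \<in> set ix")
    case False
    show ?thesis using drop0[OF o False sh_mono] .
  next
    case T0: True
    show ?thesis
    proof (cases "1 \<in> set ix")
      case True
      have "?ys ! 0 = Suc (?ys ! 1)" by (simp add: sh_def)
      then show ?thesis using adjacent[OF o T0 True _ assms(3,4)] by blast
    next
      case False
      have ys: "?ys = sh a a # a # map (sh (Suc a)) xs" by (simp add: sh_def)
      have "\<forall>v\<in>set xs. sh (Suc a) v = sh a v" using assms(2) by (auto simp: sh_def le_less)
      then show ?thesis using drop1[OF o[unfolded ys] False _ sh_mono] by blast
    qed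
  qed
qed

lemma pats1: "(q::nat list) \<in> {[2,4,1,3],[2,4,3,1],[4,2,1,3],[4,2,3,1]} \<Longrightarrow> 1 < length q"
  by auto
lemma pats2: "(q::nat list) \<in> {[2,4,1,3],[2,4,3,1],[4,2,1,3],[4,2,3,1]} \<Longrightarrow> \<exists>b<length q. q!b < q!(0::nat)"
  by (auto simp: numeral_eq_Suc Ex_less_Suc)
lemma pats3: "(q::nat list) \<in> {[2,4,1,3],[2,4,3,1],[4,2,1,3],[4,2,3,1]} \<Longrightarrow> \<exists>b<length q. q!b < q!(1::nat)"
  by (auto simp: numeral_eq_Suc Ex_less_Suc)
lemma pats4: "(q::nat list) \<in> {[2,4,1,3],[2,4,3,1],[4,2,1,3],[4,2,3,1]} \<Longrightarrow>
    \<exists>c<length q. (q!0 < q!c \<and> q!c < q!1) \<or> (q!1 < q!c \<and> q!c < (q!0::nat))"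
  by (auto simp: numeral_eq_Suc Ex_less_Suc)


abbreviation "Pats \<equiv> {[2,4,1,3],[2,4,3,1],[4,2,1,3],[4,2,3,1]} :: nat list set"

lemma rect_of:
  assumes "is_perm ys" "rectangular xs" "\<And>q. q \<in> Pats \<Longrightarrow> contains_pattern q ys \<Longrightarrow> contains_pattern q xs"
  shows "rectangular ys"
  using assms unfolding rectangular_def avoids_def by blast

lemma perm_0: "is_perm xs \<Longrightarrow> 0 \<notin> set xs" by (auto simp: is_perm_def)
lemma perm_hd: "is_perm (a # xs) \<Longrightarrow> a \<notin> set xs \<and> 1 \<le> a \<and> a \<le> Suc (length xs)"
  by (auto simp: is_perm_def)

lemma rho1': "rho i (Suc 0) xs = i # map (sh i) xs" by (simp add: rho_sh)

lemma psi_Some: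
  assumes "psi x p = Some q"
  shows "rectangular q \<and> length q = Suc (length p) \<and> (hd q = 1 \<longleftrightarrow> x = One)"
proof (cases x)
  case One
  then have r: "rectangular p" and q: "q = 1 # map (sh 1) p" using assms rho1[of 1 p] by (auto split: if_splits)
  have pp: "is_perm p" using r by (simp add: rectangular_def)
  have "rectangular q" unfolding q
  proof (rule rect_of[OF perm_ins[OF pp] r])
    fix qq assume qq: "qq \<in> Pats" "contains_pattern qq (1 # map (sh 1) p)"
    show "contains_pattern qq p" by (rule pres1[OF qq(2) perm_0[OF pp] pats2[OF qq(1)]])
  qed auto
  then show ?thesis using q One by simp
next
  case Two
  then obtain a l where r: "rectangular (a # l)" and p: "p = a # l" and a1: "a \<noteq> 1"
     and q: "q = sh 1 a # 1 # map (sh 1) l"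
    using assms by (cases p) (auto simp: rho2 split: if_splits)
  have pp: "is_perm (a # l)" using r by (simp add: rectangular_def)
  have pp': "is_perm (sh 1 a # 1 # map (sh 1) l)"
    using perm_swap[of 1 "sh 1 a" "map (sh 1) l"] perm_ins[OF pp, of 1] by simp
  have "rectangular q" unfolding q
  proof (rule rect_of[OF pp' r])
    fix qq assume qq: "qq \<in> Pats" "contains_pattern qq (sh 1 a # 1 # map (sh 1) l)"
    show "contains_pattern qq (a # l)" by (rule pres2[OF qq(2) perm_0[OF pp] pats2[OF qq(1)] pats3[OF qq(1)] pats1[OF qq(1)]])
  qed
  moreover have "hd q \<noteq> 1" using q perm_hd[OF pp] by (simp add: sh_def)
  ultimately show ?thesis using q p Two by simp
next
  case U
  then obtain a l where r: "rectangular (a # l)" and p: "p = a # l" and a1: "a \<noteq> 1"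
     and q: "q = a # map (sh a) (a # l)"
    using assms by (cases p) (auto simp: rho1' split: if_splits)
  have pp: "is_perm (a # l)" using r by (simp add: rectangular_def)
  have pp': "is_perm (a # map (sh a) (a # l))"
    using perm_ins[OF pp, of a] perm_hd[OF pp] by simp
  have "rectangular q" unfolding q
  proof (rule rect_of[OF pp' r])
    fix qq assume qq: "qq \<in> Pats" "contains_pattern qq (a # map (sh a) (a # l))"
    show "contains_pattern qq (a # l)" using presU[OF qq(2) _ pats1[OF qq(1)] pats4[OF qq(1)]] perm_hd[OF pp] by blast
  qed
  then show ?thesis using q p U a1 by simp
next
  case D
  then obtain a l where r: "rectangular (a # l)" and p: "p = a # l"
     and q: "q = Suc a # map (sh (Suc a)) (a # l)"
    using assms by (cases p) (auto simp: rho1' split: if_splits)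
  have pp: "is_perm (a # l)" using r by (simp add: rectangular_def)
  have pp': "is_perm (Suc a # map (sh (Suc a)) (a # l))"
    using perm_ins[OF pp, of "Suc a"] perm_hd[OF pp] by simp
  have "rectangular q" unfolding q
  proof (rule rect_of[OF pp' r])
    fix qq assume qq: "qq \<in> Pats" "contains_pattern qq (Suc a # map (sh (Suc a)) (a # l))"
    show "contains_pattern qq (a # l)" using presD[OF qq(2) _ pats1[OF qq(1)] pats4[OF qq(1)]] perm_hd[OF pp] by blast
  qed
  then show ?thesis using q p D perm_hd[OF pp] by simp
qed


fun bad :: "letter list \<Rightarrow> bool" where
  "bad (x # y # ys) = (((x = Two \<or> x = U) \<and> y = One) \<or> bad (y # ys))"
| "bad _ = False"

lemma bad_sublist: "bad w \<longleftrightarrow> sublist [Two, One] w \<or> sublist [U, One] w"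
  by (induction w rule: bad.induct) (auto simp: sublist_Cons_right)

lemma eval_Some: "eval_word w = Some p \<Longrightarrow> rectangular p \<and> length p = length w \<and> (w \<noteq> [] \<longrightarrow> (hd p = 1 \<longleftrightarrow> hd w = One))"
proof (induction w arbitrary: p)
  case Nil
  then show ?case by (simp add: rectangular_def is_perm_def avoids_def contains_pattern_def)
next
  case (Cons x w)
  then obtain p' where "eval_word w = Some p'" "psi x p' = Some p" by (auto split: option.splits)
  then show ?case using Cons.IH[of p'] psi_Some[of x p' p] by simp
qed

lemma eval_iff: "eval_word w \<noteq> None \<longleftrightarrow> w = [] \<or> (last w = One \<and> \<not> bad w)"
proof (induction w)
  case Nil
  then show ?case by simp
next
  case (Cons x w)
  show ?case
  proof (cases "eval_word w")
    case None
    then have "w \<noteq> []" "last w \<noteq> One \<or> bad w" using Cons.IH by auto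
    moreover have "bad w \<Longrightarrow> bad (x # w)" by (cases w) auto
    ultimately show ?thesis using None by auto
  next
    case (Some p')
    note e = eval_Some[OF Some]
    show ?thesis
    proof (cases "w = []")
      case True
      then show ?thesis using Some e by (cases x) auto
    next
      case False
      then obtain y w' where w: "w = y # w'" by (cases w) auto
      have l: "p' \<noteq> []" using e False by auto
      have r: "rectangular p'" and h: "hd p' = 1 \<longleftrightarrow> y = One" using e w by auto
      have lw: "last w = One" "\<not> bad w" using Cons.IH Some False by auto
      have "eval_word (x # w) = psi x p'" using Some by simp
      moreover have "last (x # w) = last w" using w by simp
      moreover have "bad (x # w) \<longleftrightarrow> ((x = Two \<or> x = U) \<and> y = One) \<or> bad w" using w by simp
      moreover have "length p' \<ge> 1" using l by (cases p') auto
      ultimately show ?thesis using r h lw by (cases x) auto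
    qed
  qed
qed

lemma L_Rect_char: "L_Rect = {w. w \<noteq> [] \<and> last w = One \<and> \<not> sublist [Two, One] w \<and> \<not> sublist [U, One] w}"
  unfolding L_Rect_def using eval_iff bad_sublist by auto


lemma bad_Cons: "bad (x # l) \<longleftrightarrow> (l \<noteq> [] \<and> (x = Two \<or> x = U) \<and> hd l = One) \<or> bad l"
  by (cases l) auto

lemma bad_append: "bad (xs @ ys) \<longleftrightarrow> bad xs \<or> bad ys \<or> (xs \<noteq> [] \<and> ys \<noteq> [] \<and> (last xs = Two \<or> last xs = U) \<and> hd ys = One)"
proof (induction xs)
  case (Cons x xs)
  then show ?case by (cases xs) (auto simp: bad_Cons)
qed simp

lemma bad_noOne: "One \<notin> set x \<Longrightarrow> \<not> bad x"
proof (induction x)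
  case (Cons c x)
  have h: "x \<noteq> [] \<Longrightarrow> hd x \<noteq> One" using Cons.prems hd_in_set by fastforce
  have "\<not> bad x" using Cons.IH Cons.prems by simp
  then show ?case using h by (cases "x = []") (auto simp: bad_Cons)
qed simp

lemma bad_onlyOne: "set x \<subseteq> {One} \<Longrightarrow> \<not> bad x"
  by (induction x) (auto simp: bad_Cons)

lemma conc_iff: "w \<in> conc A B \<longleftrightarrow> (\<exists>u v. w = u @ v \<and> u \<in> A \<and> v \<in> B)"
  by (auto simp: conc_def)

lemma star_letters:
  assumes "\<forall>u\<in>A. \<exists>c\<in>C. u = [c]" "\<forall>c\<in>C. [c] \<in> A"
  shows "x \<in> star A \<longleftrightarrow> set x \<subseteq> C"
proof
  assume "x \<in> star A" then show "set x \<subseteq> C"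
    by (induction rule: star.induct) (use assms(1) in fastforce)+
next
  assume "set x \<subseteq> C" then show "x \<in> star A"
  proof (induction x)
    case Nil show ?case by (rule star_nil)
  next
    case (Cons c x)
    then have "[c] @ x \<in> star A" using assms(2) by (intro star_app) auto
    then show ?case by simp
  qed
qed

lemma star1: "x \<in> star {[One]} \<longleftrightarrow> set x \<subseteq> {One}"
  by (rule star_letters) auto

lemma star2: "x \<in> star ({[Two]} \<union> {[U]}) \<longleftrightarrow> set x \<subseteq> {Two, U}"
  by (rule star_letters) auto

definition Blk :: "letter list set" where
  "Blk = conc (star {[One]}) (conc (star ({[Two]} \<union> {[U]})) {[D]})"

lemma Blk_iff: "u \<in> Blk \<longleftrightarrow> (\<exists>x1 x2. u = x1 @ x2 @ [D] \<and> set x1 \<subseteq> {One} \<and> set x2 \<subseteq> {Two, U})"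
  unfolding Blk_def conc_iff star1 star2 by auto

definition TT :: "letter list set" where
  "TT = {v. v = [] \<or> (last v = D \<and> \<not> bad v)}"

lemma Blk_ok: assumes "u \<in> Blk" shows "u \<noteq> [] \<and> last u = D \<and> \<not> bad u"
proof -
  obtain x1 x2 where u: "u = x1 @ x2 @ [D]" "set x1 \<subseteq> {One}" "set x2 \<subseteq> {Two, U}"
    using assms Blk_iff by blast
  have "\<not> bad x1" using u(2) bad_onlyOne by blast
  have "\<not> bad x2" using u(3) bad_noOne by blast
  have "\<not> bad (x2 @ [D])" using \<open>\<not> bad x2\<close> by (simp add: bad_append)
  moreover have "x1 \<noteq> [] \<Longrightarrow> last x1 = One" using u(2) last_in_set by fastforce
  ultimately have "\<not> bad u" using u(1) \<open>\<not> bad x1\<close> bad_append[of x1 "x2 @ [D]"] by auto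
  then show ?thesis using u(1) by simp
qed

lemma star_sub: "v \<in> star Blk \<Longrightarrow> v \<in> TT"
proof (induction rule: star.induct)
  case star_nil then show ?case by (simp add: TT_def)
next
  case (star_app u v)
  have u: "u \<noteq> []" "last u = D" "\<not> bad u" using Blk_ok[OF star_app(1)] by auto
  have v: "v = [] \<or> (last v = D \<and> \<not> bad v)" using star_app(3) by (simp add: TT_def)
  have "\<not> bad (u @ v)" using u v by (auto simp: bad_append)
  moreover have "last (u @ v) = D" using u v by (auto simp: last_append)
  ultimately show ?case by (simp add: TT_def)
qed

lemma split_ones: "D \<notin> set x \<Longrightarrow> \<not> bad x \<Longrightarrow> \<exists>x1 x2. x = x1 @ x2 \<and> set x1 \<subseteq> {One} \<and> set x2 \<subseteq> {Two, U}"
proof (induction x)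
  case Nil then show ?case by auto
next
  case (Cons c x)
  have "D \<notin> set x" "\<not> bad x" using Cons.prems by (auto simp: bad_Cons)
  then obtain x1 x2 where x: "x = x1 @ x2" "set x1 \<subseteq> {One}" "set x2 \<subseteq> {Two, U}"
    using Cons.IH by blast
  show ?case
  proof (cases "c = One")
    case True
    then show ?thesis using x by (intro exI[of _ "c # x1"] exI[of _ x2]) auto
  next
    case False
    then have c: "c = Two \<or> c = U" using Cons.prems(1) by (cases c) auto
    have "x1 = []"
    proof (rule ccontr)
      assume "x1 \<noteq> []"
      then have "hd x1 \<in> {One}" using x(2) hd_in_set[of x1] by blast
      then have "hd x = One" using x(1) \<open>x1 \<noteq> []\<close> by simp
      then show False using Cons.prems(2) c \<open>x1 \<noteq> []\<close> x(1) by (auto simp: bad_Cons)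
    qed
    then show ?thesis using x c by (intro exI[of _ "[]"] exI[of _ "c # x2"]) auto
  qed
qed

lemma sub_star: "v \<in> TT \<Longrightarrow> v \<in> star Blk"
proof (induction "length v" arbitrary: v rule: less_induct)
  case less
  show ?case
  proof (cases "v = []")
    case True then show ?thesis by (simp add: star_nil)
  next
    case False
    then have lv: "last v = D" "\<not> bad v" using less.prems by (auto simp: TT_def)
    then have "D \<in> set v" using False last_in_set by fastforce
    then obtain x y where v: "v = x @ D # y" "D \<notin> set x" using split_list_first by metis
    have bx: "\<not> bad x" and b_y: "\<not> bad y" using lv(2) v(1) bad_append[of x "D # y"] bad_Cons[of D y] by auto
    obtain x1 x2 where x: "x = x1 @ x2" "set x1 \<subseteq> {One}" "set x2 \<subseteq> {Two, U}"
      using split_ones[OF v(2) bx] by blast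
    have "x @ [D] \<in> Blk" using x Blk_iff by auto
    moreover have "y \<in> TT" using b_y lv(1) v(1) by (cases "y = []") (auto simp: TT_def)
    then have "y \<in> star Blk" using less.hyps v(1) by auto
    ultimately have "(x @ [D]) @ y \<in> star Blk" by (rule star_app)
    then show ?thesis using v(1) by simp
  qed
qed

lemma split_last_ones: "w \<noteq> [] \<Longrightarrow> last w = One \<Longrightarrow> \<exists>v o1. w = v @ o1 \<and> o1 \<noteq> [] \<and> set o1 \<subseteq> {One} \<and> (v = [] \<or> last v \<noteq> One)"
proof (induction w rule: rev_induct)
  case Nil then show ?case by simp
next
  case (snoc c w)
  then have c: "c = One" by simp
  show ?case
  proof (cases "w = [] \<or> last w \<noteq> One")
    case True
    then show ?thesis using c by (intro exI[of _ w] exI[of _ "[c]"]) auto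
  next
    case False
    then obtain v o1 where "w = v @ o1" "o1 \<noteq> []" "set o1 \<subseteq> {One}" "v = [] \<or> last v \<noteq> One"
      using snoc.IH by blast
    then show ?thesis using c by (intro exI[of _ v] exI[of _ "o1 @ [c]"]) auto
  qed
qed

lemma lang_char: "lang rect_rexp = {w. w \<noteq> [] \<and> last w = One \<and> \<not> bad w}"
proof -
  have L: "lang rect_rexp = conc (star Blk) (conc {[One]} (star {[One]}))"
    by (simp add: rect_rexp_def Plus1_def Blk_def)
  have O: "o1 \<in> conc {[One]} (star {[One]}) \<longleftrightarrow> o1 \<noteq> [] \<and> set o1 \<subseteq> {One}" for o1
    unfolding conc_iff star1 by (cases o1) auto
  show ?thesis
  proof (intro equalityI subsetI)
    fix w assume "w \<in> lang rect_rexp"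
    then have "\<exists>v o1. w = v @ o1 \<and> v \<in> star Blk \<and> o1 \<in> conc {[One]} (star {[One]})"
      unfolding L conc_iff by blast
    then obtain v o1 where w: "w = v @ o1" "v \<in> star Blk" and "o1 \<in> conc {[One]} (star {[One]})"
      by blast
    then have o: "o1 \<noteq> []" "set o1 \<subseteq> {One}" using O by auto
    have v: "v = [] \<or> (last v = D \<and> \<not> bad v)" using star_sub[OF w(2)] by (simp add: TT_def)
    have "last o1 \<in> {One}" using o last_in_set by blast
    then have lo: "last w = One" using w(1) o(1) by (simp add: last_append)
    have bo: "\<not> bad o1" using o(2) bad_onlyOne by blast
    have "\<not> bad w"
    proof (cases "v = []")
      case True then show ?thesis using w(1) bo by simp
    next
      case False then show ?thesis using w(1) bo v bad_append[of v o1] by auto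
    qed
    then show "w \<in> {w. w \<noteq> [] \<and> last w = One \<and> \<not> bad w}"
      using w(1) o(1) lo by simp
  next
    fix w assume "w \<in> {w. w \<noteq> [] \<and> last w = One \<and> \<not> bad w}"
    then have w: "w \<noteq> []" "last w = One" "\<not> bad w" by auto
    obtain v o1 where d: "w = v @ o1" "o1 \<noteq> []" "set o1 \<subseteq> {One}" "v = [] \<or> last v \<noteq> One"
      using split_last_ones[OF w(1,2)] by blast
    have "hd o1 \<in> {One}" using d(2,3) hd_in_set by blast
    then have "hd o1 = One" by simp
    have ba: "bad w \<longleftrightarrow> bad v \<or> bad o1 \<or> (v \<noteq> [] \<and> o1 \<noteq> [] \<and> (last v = Two \<or> last v = U) \<and> hd o1 = One)"
      using d(1) bad_append by blast
    have "\<not> bad v" using ba w(3) by blast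
    moreover have "v \<noteq> [] \<Longrightarrow> last v \<noteq> Two \<and> last v \<noteq> U" using ba w(3) d(2) \<open>hd o1 = One\<close> by blast
    ultimately have "v \<in> TT" using d(4) unfolding TT_def by (cases "last v") auto
    then have "v \<in> star Blk" by (rule sub_star)
    moreover have "o1 \<in> conc {[One]} (star {[One]})" using O d(2,3) by blast
    ultimately show "w \<in> lang rect_rexp" unfolding L conc_iff using d(1) by blast
  qed
qed

theorem lemma3p3:
  shows "L_Rect = {w. w \<noteq> [] \<and> last w = One \<and> \<not> sublist [Two, One] w \<and> \<not> sublist [U, One] w}
         \<and> L_Rect = lang rect_rexp"
  using L_Rect_char lang_char bad_sublist by auto


end
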